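(* Given $\xi_2\in\mathbb{R}$, write $\xi_2=m+\theta$ with $m\in\mathbb{Z}$, $-\tfrac12\le\theta<\tfrac12$. Let $\eta>1$. Then there is a constant $C_\eta$ such that for all $f\in\mathcal S_\eta(\mathbb{R})$, all $y\ge\tfrac12$ and all $x,\phi\in\mathbb{R}$, $\xi_1\in\mathbb{R}$, $\zeta\in\mathbb{R}$, \[\Big|\Theta_f(x+iy,\phi;\xi,\zeta)-y^{1/4}e\Big(\zeta+\frac{(m-\theta)\xi_1+\theta^2x}{2}\Big)f_\phi(-\theta y^{1/2})\Big|\le C_\eta\,\kappa_\eta(f)\,y^{-(2\eta-1)/4}.\]
   Context: $e(x)=e^{2\pi ix}$, $\xi=(\xi_1,\xi_2)$. For $f:\mathbb{R}\to\mathbb{R}$ and $\phi\in\mathbb{R}$: $f_\phi=f$ if $\phi\equiv0\bmod2\pi$; $f_\phi(w)=e(-1/4)f(-w)$ if $\phi\equiv\pi\bmod2\pi$; otherwise $f_\phi(w)=e(-\sigma_\phi/8)|\sin\phi|^{-1/2}\int_\mathbb{R}e\big(\frac{\frac12(w^2+w'^2)\cos\phi-ww'}{\sin\phi}\big)f(w')dw'$ with $\sigma_\phi=2\nu+1$ for $\nu\pi<\phi<(\nu+1)\pi$, $\nu\in\mathbb{Z}$. $\kappa_\eta(f)=\sup_{w,\phi}|f_\phi(w)|(1+|w|)^\eta$ and $\mathcal S_\eta(\mathbb{R})=\{f:\mathbb{R}\to\mathbb{R}:\kappa_\eta(f)<\infty\}$. For $f\in\mathcal S_\eta$, $\eta>1$: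 $\Theta_f(x+iy,\phi;\xi,\zeta)=y^{1/4}e(\zeta-\tfrac12\xi_1\xi_2)\sum_{n\in\mathbb{Z}}f_\phi((n-\xi_2)y^{1/2})e(\tfrac12(n-\xi_2)^2x+n\xi_1)$. *)

theory Defs
  imports "HOL-Analysis.Analysis"
begin

definition ee :: "real \<Rightarrow> complex" where
  "ee t = exp (2 * pi * \<i> * complex_of_real t)"

definition sigma_phi :: "real \<Rightarrow> int" where
  "sigma_phi \<phi> = 2 * \<lfloor>\<phi> / pi\<rfloor> + 1"

definition fphi :: "(real \<Rightarrow> real) \<Rightarrow> real \<Rightarrow> real \<Rightarrow> complex" where
  "fphi f \<phi> w =
    (if \<exists>k::int. \<phi> = 2 * pi * k then complex_of_real (f w)
     else if \<exists>k::int. \<phi> = pi + 2 * pi * k then ee (-1/4) * complex_of_real (f (- w))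
     else ee (- real_of_int (sigma_phi \<phi>) / 8) * complex_of_real (\<bar>sin \<phi>\<bar> powr (-1/2)) *
       integral\<^sup>L lborel (\<lambda>w'. ee (((1/2) * (w\<^sup>2 + w'\<^sup>2) * cos \<phi> - w * w') / sin \<phi>)
                                 * complex_of_real (f w')))"

definition kappa :: "real \<Rightarrow> (real \<Rightarrow> real) \<Rightarrow> real" where
  "kappa \<eta> f = (SUP p \<in> (UNIV :: (real \<times> real) set).
                   cmod (fphi f (snd p) (fst p)) * (1 + \<bar>fst p\<bar>) powr \<eta>)"

text \<open>S_eta(R) = {f : kappa_eta(f) < infinity}\<close>
definition S_eta :: "real \<Rightarrow> (real \<Rightarrow> real) set" where
  "S_eta \<eta> = {f. bdd_above ((\<lambda>p. cmod (fphi f (snd p) (fst p)) * (1 + \<bar>fst p\<bar>) powr \<eta>) ` UNIV)}"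

definition Theta :: "(real \<Rightarrow> real) \<Rightarrow> real \<Rightarrow> real \<Rightarrow> real \<Rightarrow> real \<Rightarrow> real \<Rightarrow> real \<Rightarrow> complex" where
  "Theta f x y \<phi> \<xi>1 \<xi>2 \<zeta> =
     complex_of_real (y powr (1/4)) * ee (\<zeta> - (1/2) * \<xi>1 * \<xi>2) *
     (\<Sum>\<^sub>\<infinity>n::int. fphi f \<phi> ((real_of_int n - \<xi>2) * sqrt y) *
                 ee ((1/2) * (real_of_int n - \<xi>2)\<^sup>2 * x + real_of_int n * \<xi>1))"

end

theory Submission
  imports Defs
begin

lemma powr_int_summable:
  assumes "\<eta> > 1"
  shows "(\<lambda>k::int. real_of_int \<bar>k\<bar> powr -\<eta>) summable_on UNIV"
proof -
  have 0: "(\<lambda>n::nat. real n powr -\<eta>) summable_on UNIV"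
    using summable_on_UNIV_nonneg_real_iff[of "\<lambda>n::nat. real n powr -\<eta>"] summable_real_powr_iff[of "-\<eta>"] assms
    by simp
  have 1: "(\<lambda>k::int. real_of_int \<bar>k\<bar> powr -\<eta>) summable_on range int"
    by (subst summable_on_reindex) (use 0 in \<open>auto simp: o_def\<close>)
  have 2: "(\<lambda>k::int. real_of_int \<bar>k\<bar> powr -\<eta>) summable_on range (\<lambda>n. - int n)"
    by (subst summable_on_reindex) (use 0 in \<open>auto simp: o_def inj_on_def\<close>)
  have U: "(UNIV::int set) = range int \<union> range (\<lambda>n. - int n)"
  proof -
    have "k \<in> range int \<union> range (\<lambda>n. - int n)" for k :: int
    proof (cases "k \<ge> 0")
      case True then show ?thesis by (intro UnI1 image_eqI[of _ _ "nat k"]) auto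
    next
      case False then show ?thesis by (intro UnI2 image_eqI[of _ _ "nat (-k)"]) auto
    qed
    then show ?thesis by blast
  qed
  show ?thesis unfolding U by (rule summable_on_union[OF 1 2])
qed

lemma kappa_bound:
  assumes "f \<in> S_eta \<eta>"
  shows "cmod (fphi f \<phi> w) * (1 + \<bar>w\<bar>) powr \<eta> \<le> kappa \<eta> f"
  using assms unfolding kappa_def S_eta_def
  by (intro cSUP_upper2[where x="(w,\<phi>)"]) auto

lemma ee_add: "ee a * ee b = ee (a + b)"
  unfolding ee_def by (simp add: exp_add[symmetric] algebra_simps)

lemma norm_ee[simp]: "cmod (ee a) = 1"
  unfolding ee_def by (simp add: norm_exp_eq_Re)

theorem lemma2p1:
  fixes \<eta> :: real
  assumes "\<eta> > 1"
  shows "\<exists>C::real. \<forall>f \<in> S_eta \<eta>. \<forall>y x \<phi> \<xi>1 \<xi>2 \<zeta> :: real. \<forall>(m::int) (\<theta>::real).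
           y \<ge> 1/2 \<and> \<xi>2 = real_of_int m + \<theta> \<and> -1/2 \<le> \<theta> \<and> \<theta> < 1/2 \<longrightarrow>
           cmod (Theta f x y \<phi> \<xi>1 \<xi>2 \<zeta>
                 - complex_of_real (y powr (1/4))
                   * ee (\<zeta> + ((real_of_int m - \<theta>) * \<xi>1 + \<theta>\<^sup>2 * x) / 2)
                   * fphi f \<phi> (- \<theta> * sqrt y))
           \<le> C * kappa \<eta> f * y powr (- (2 * \<eta> - 1) / 4)"
proof -
  define p where "p = (\<lambda>k::int. real_of_int \<bar>k\<bar> powr -\<eta>)"
  have psum: "p summable_on UNIV" unfolding p_def by (rule powr_int_summable[OF assms])
  define S where "S = infsum p UNIV"
  show ?thesis
  proof (intro exI[of _ "2 powr \<eta> * S"] ballI allI impI, elim conjE)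
    fix f and y x \<phi> \<xi>1 \<xi>2 \<zeta> \<theta> :: real and m :: int
    assume f: "f \<in> S_eta \<eta>" and y: "y \<ge> 1/2" and xi: "\<xi>2 = real_of_int m + \<theta>"
      and th1: "-1/2 \<le> \<theta>" and th2: "\<theta> < 1/2"
    define K where "K = kappa \<eta> f"
    have K0: "K \<ge> 0" using kappa_bound[OF f, of \<phi> 0] unfolding K_def
      by (smt (verit) norm_ge_zero powr_ge_zero mult_nonneg_nonneg)
    define G where "G = (\<lambda>n::int. fphi f \<phi> ((real_of_int n - \<xi>2) * sqrt y) *
                 ee ((1/2) * (real_of_int n - \<xi>2)\<^sup>2 * x + real_of_int n * \<xi>1))"
    define q where "q = (\<lambda>n::int. p (n - m))"
    have bij: "bij_betw (\<lambda>n::int. n - m) UNIV UNIV"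
      unfolding bij_betw_def inj_on_def by (auto intro!: image_eqI[where x="_ + m"])
    have qsum: "q summable_on UNIV"
      unfolding q_def using summable_on_reindex_bij_betw[OF bij, of p] psum by simp
    have qS: "infsum q UNIV = S"
      unfolding q_def S_def using infsum_reindex_bij_betw[OF bij, of p] by simp
    have qm: "q m = 0" unfolding q_def p_def by simp
    have q0: "q n \<ge> 0" for n unfolding q_def p_def by simp
    define c where "c = K * (sqrt y / 2) powr -\<eta>"
    have c0: "c \<ge> 0" unfolding c_def using K0 by simp
    have ypos: "sqrt y > 0" using y by simp
    have bound: "norm (G n) \<le> c * q n" if nm: "n \<in> UNIV - {m}" for n
    proof -
      define w where "w = (real_of_int n - \<xi>2) * sqrt y"
      define a where "a = real_of_int \<bar>n - m\<bar> * (sqrt y / 2)"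
      have nm1: "real_of_int \<bar>n - m\<bar> \<ge> 1" using nm by auto
      have "\<bar>real_of_int n - \<xi>2\<bar> \<ge> real_of_int \<bar>n - m\<bar> / 2"
        using nm1 th1 th2 unfolding xi by (auto simp: abs_if split: if_splits)
      then have wa: "\<bar>w\<bar> \<ge> a" unfolding w_def a_def using ypos
        by (simp add: abs_mult)
      have apos: "a > 0" unfolding a_def using nm1 ypos by simp
      have "a powr \<eta> \<le> (1 + \<bar>w\<bar>) powr \<eta>"
        using wa apos assms by (intro powr_mono2) auto
      have kb: "norm (fphi f \<phi> w) * (1 + \<bar>w\<bar>) powr \<eta> \<le> K"
        using kappa_bound[OF f] unfolding K_def by blast
      have "norm (fphi f \<phi> w) * a powr \<eta> \<le> K"
        by (rule order_trans[OF _ kb]) (intro mult_left_mono \<open>a powr \<eta> \<le> _\<close>; simp)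
      then have "norm (fphi f \<phi> w) \<le> K / a powr \<eta>"
        using apos by (simp add: field_simps)
      also have "K / a powr \<eta> = K * a powr -\<eta>" by (simp add: powr_minus divide_inverse)
      also have "a powr -\<eta> = real_of_int \<bar>n - m\<bar> powr -\<eta> * (sqrt y / 2) powr -\<eta>"
        unfolding a_def using ypos by (subst powr_mult[symmetric]) auto
      finally have "norm (fphi f \<phi> w) \<le> c * q n"
        unfolding c_def q_def p_def by (simp add: mult_ac)
      then show ?thesis unfolding G_def w_def by (simp add: norm_mult)
    qed
    have cq: "(\<lambda>n. c * q n) summable_on (UNIV - {m})"
      by (intro summable_on_cmult_right summable_on_subset[OF qsum]) auto
    have Gabs: "(\<lambda>n. norm (G n)) summable_on (UNIV - {m})"
      by (rule summable_on_comparison_test[OF cq]) (use bound in auto)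
    have Gs: "G summable_on (UNIV - {m})" by (rule abs_summable_summable[OF Gabs])
    have U: "insert m (UNIV - {m}) = UNIV" by auto
    have Gsplit: "infsum G UNIV = G m + infsum G (UNIV - {m})"
      using infsum_insert[OF Gs, of m] U by simp
    have qsplit: "infsum q UNIV = infsum q (UNIV - {m})"
      using infsum_insert[OF summable_on_subset[OF qsum], of "UNIV - {m}" m] U qm by simp
    define R where "R = infsum G (UNIV - {m})"
    have "norm R \<le> infsum (\<lambda>n. norm (G n)) (UNIV - {m})"
      unfolding R_def by (rule norm_infsum_bound[OF Gabs])
    also have "\<dots> \<le> infsum (\<lambda>n. c * q n) (UNIV - {m})"
      by (rule infsum_mono[OF Gabs cq]) (use bound in auto)
    also have "\<dots> = c * S" using qsplit qS by (simp add: infsum_cmult_right')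
    finally have Rb: "norm R \<le> c * S" .
    have Gm: "ee (\<zeta> - (1/2) * \<xi>1 * \<xi>2) * G m
        = ee (\<zeta> + ((real_of_int m - \<theta>) * \<xi>1 + \<theta>\<^sup>2 * x) / 2) * fphi f \<phi> (- \<theta> * sqrt y)"
    proof -
      have "ee (\<zeta> - (1/2) * \<xi>1 * \<xi>2) * G m = fphi f \<phi> (- \<theta> * sqrt y) *
         (ee (\<zeta> - (1/2) * \<xi>1 * \<xi>2) * ee ((1/2) * (real_of_int m - \<xi>2)\<^sup>2 * x + real_of_int m * \<xi>1))"
        unfolding G_def xi by (simp add: mult_ac)
      also have "ee (\<zeta> - (1/2) * \<xi>1 * \<xi>2) * ee ((1/2) * (real_of_int m - \<xi>2)\<^sup>2 * x + real_of_int m * \<xi>1)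
         = ee (\<zeta> + ((real_of_int m - \<theta>) * \<xi>1 + \<theta>\<^sup>2 * x) / 2)"
        unfolding ee_add xi by (rule arg_cong[where f=ee]) (simp add: power2_eq_square field_simps)
      finally show ?thesis by (simp add: mult_ac)
    qed
    have diff: "Theta f x y \<phi> \<xi>1 \<xi>2 \<zeta>
                 - complex_of_real (y powr (1/4))
                   * ee (\<zeta> + ((real_of_int m - \<theta>) * \<xi>1 + \<theta>\<^sup>2 * x) / 2)
                   * fphi f \<phi> (- \<theta> * sqrt y)
        = complex_of_real (y powr (1/4)) * ee (\<zeta> - (1/2) * \<xi>1 * \<xi>2) * R"
    proof -
      have "Theta f x y \<phi> \<xi>1 \<xi>2 \<zeta> = complex_of_real (y powr (1/4)) * ee (\<zeta> - (1/2) * \<xi>1 * \<xi>2) * (G m + R)"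
        unfolding Theta_def G_def[symmetric] Gsplit R_def ..
      then show ?thesis using Gm by (simp add: algebra_simps)
    qed
    have "cmod (complex_of_real (y powr (1/4)) * ee (\<zeta> - (1/2) * \<xi>1 * \<xi>2) * R)
          = y powr (1/4) * norm R" by (simp add: norm_mult)
    also have "\<dots> \<le> y powr (1/4) * (c * S)" using Rb by (intro mult_left_mono) auto
    also have "y powr (1/4) * (c * S) = 2 powr \<eta> * S * K * y powr (- (2 * \<eta> - 1) / 4)"
    proof -
      have "(sqrt y / 2) powr -\<eta> = y powr (-\<eta>/2) * 2 powr \<eta>"
        proof -
        have "sqrt y = y powr (1/2)" using y by (simp add: powr_half_sqrt)
        then have "(sqrt y / 2) powr -\<eta> = (y powr (1/2)) powr -\<eta> / 2 powr -\<eta>"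
          using y by (simp add: powr_divide)
        also have "\<dots> = y powr (-\<eta>/2) * 2 powr \<eta>"
        proof -
          have a: "(y powr (1/2)) powr -\<eta> = y powr (-\<eta>/2)" by (simp add: powr_powr)
          have b: "(2::real) powr -\<eta> = 1 / 2 powr \<eta>" by (rule powr_minus_divide)
          show ?thesis unfolding a b by simp
        qed
        finally show ?thesis .
      qed
      moreover have "y powr (1/4) * y powr (-\<eta>/2) = y powr (- (2 * \<eta> - 1) / 4)"
        using y by (simp add: powr_add[symmetric] field_simps)
      ultimately show ?thesis unfolding c_def by (simp add: mult_ac)
    qed
    finally show "cmod (Theta f x y \<phi> \<xi>1 \<xi>2 \<zeta>
                 - complex_of_real (y powr (1/4))
                   * ee (\<zeta> + ((real_of_int m - \<theta>) * \<xi>1 + \<theta>\<^sup>2 * x) / 2)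
                   * fphi f \<phi> (- \<theta> * sqrt y))
           \<le> 2 powr \<eta> * S * kappa \<eta> f * y powr (- (2 * \<eta> - 1) / 4)"
      unfolding diff K_def .
  qed
qed

end
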